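(* Let $m>1$ and let $\mathcal{H}=\sum_{j=1}^r\lambda_j[u_j^1,\ldots,u_j^m]_{\otimes h}$ with $0\neq\lambda_j\in\mathbb{R}$ and $u_j^i\in\mathbb{C}^{n_i}$. For each $i=1,\ldots,m$ let $U_i=\{u_1^i,\ldots,u_r^i\}$. If $k_{U_1}+\cdots+k_{U_m}\ge r+m$, then $\operatorname{hrank}(\mathcal{H})=r$ and the Hermitian rank decomposition of $\mathcal{H}$ is essentially unique, i.e. unique up to permutation of the terms and scaling of the decomposing vectors.
   Context: For $v_i\in\mathbb{C}^{n_i}$, $[v_1,\ldots,v_m]_{\otimes h}:=v_1\otimes\cdots\otimes v_m\otimes\overline{v_1}\otimes\cdots\otimes\overline{v_m}$. For a Hermitian tensor $\mathcal{H}$ (i.e. $\mathcal{H}\in\mathbb{C}^{n_1\times\cdots\times n_m\times n_1\times\cdots\times n_m}$ with $\mathcal{H}_{i_1\ldots i_m j_1\ldots j_m}=\overline{\mathcal{H}_{j_1\ldots j_m i_1\ldots i_m}}$), $\operatorname{hrank}(\mathcal{H})$ is the smallest $r$ with $\mathcal{H}=\sum_{i=1}^r\lambda_i[u_i^1,\ldots,u_i^m]_{\otimes h}$, $\lambda_i\in\mathbb{R}$, $u_i^j\in\mathbb{C}^{n_j}$; such a decomposition of minimal length is a Hermitian rank decomposition. For a finite set (list) $S$ of vectors, its Kruskal rank $k_S$ is the largest $k$ such that every subset of $k$ vectors of $S$ is linearly independent. *)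

theory Defs
  imports Complex_Main "HOL-Combinatorics.Permutations"
begin

text \<open>There are m modes, numbered 0..m-1, with dimensions n 0, ..., n (m-1).
  A vector of C^d is represented by a function nat => complex; only its components x < d matter.
  A tensor in C^(n_1 x ... x n_m x n_1 x ... x n_m) is represented as a function taking two
  multi-indices (lists of length m); only valid multi-indices matter.
  A family of r decomposition vectors: u j i is the vector u_j^i (term j < r, mode i < m).\<close>

definition valid_idx :: "(nat \<Rightarrow> nat) \<Rightarrow> nat \<Rightarrow> nat list \<Rightarrow> bool" where
  "valid_idx n m is \<longleftrightarrow> length is = m \<and> (\<forall>k<m. is ! k < n k)"

definition tensor_eq :: "(nat \<Rightarrow> nat) \<Rightarrow> nat \<Rightarrow>
    (nat list \<Rightarrow> nat list \<Rightarrow> complex) \<Rightarrow> (nat list \<Rightarrow> nat list \<Rightarrow> complex) \<Rightarrow> bool" where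
  "tensor_eq n m A B \<longleftrightarrow> (\<forall>is js. valid_idx n m is \<and> valid_idx n m js \<longrightarrow> A is js = B is js)"

definition herm_outer :: "nat \<Rightarrow> (nat \<Rightarrow> nat \<Rightarrow> complex) \<Rightarrow> nat list \<Rightarrow> nat list \<Rightarrow> complex" where
  "herm_outer m v is js = (\<Prod>i<m. v i (is ! i) * cnj (v i (js ! i)))"

definition herm_sum :: "nat \<Rightarrow> nat \<Rightarrow> (nat \<Rightarrow> real) \<Rightarrow> (nat \<Rightarrow> nat \<Rightarrow> nat \<Rightarrow> complex)
    \<Rightarrow> nat list \<Rightarrow> nat list \<Rightarrow> complex" where
  "herm_sum m r lam u is js = (\<Sum>j<r. complex_of_real (lam j) * herm_outer m (u j) is js)"

definition hrank :: "(nat \<Rightarrow> nat) \<Rightarrow> nat \<Rightarrow> (nat list \<Rightarrow> nat list \<Rightarrow> complex) \<Rightarrow> nat" where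
  "hrank n m H = (LEAST r. \<exists>lam u. tensor_eq n m H (herm_sum m r lam u))"

text \<open>Linear independence in C^d of the vectors S j, j \<in> J (indexed, so repetitions count).\<close>
definition lin_indep_on :: "nat \<Rightarrow> (nat \<Rightarrow> nat \<Rightarrow> complex) \<Rightarrow> nat set \<Rightarrow> bool" where
  "lin_indep_on d S J \<longleftrightarrow>
     (\<forall>c :: nat \<Rightarrow> complex. (\<forall>x<d. (\<Sum>j\<in>J. c j * S j x) = 0) \<longrightarrow> (\<forall>j\<in>J. c j = 0))"

definition kruskal_rank :: "nat \<Rightarrow> nat \<Rightarrow> (nat \<Rightarrow> nat \<Rightarrow> complex) \<Rightarrow> nat" where
  "kruskal_rank d r S = (GREATEST k. k \<le> r \<and>
      (\<forall>J. J \<subseteq> {..<r} \<and> card J = k \<longrightarrow> lin_indep_on d S J))"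

end

theory Submission
  imports Defs
begin


definition ip :: "'p set \<Rightarrow> ('p \<Rightarrow> complex) \<Rightarrow> ('p \<Rightarrow> complex) \<Rightarrow> complex" where
  "ip P f h = (\<Sum>p\<in>P. f p * h p)"

definition indep :: "'p set \<Rightarrow> ('j \<Rightarrow> 'p \<Rightarrow> complex) \<Rightarrow> 'j set \<Rightarrow> bool" where
  "indep P f J \<longleftrightarrow> (\<forall>c. (\<forall>p\<in>P. (\<Sum>j\<in>J. c j * f j p) = 0) \<longrightarrow> (\<forall>j\<in>J. c j = 0))"

lemma ip_sum_left:
  "ip P (\<lambda>p. \<Sum>j\<in>J. c j * f j p) h = (\<Sum>j\<in>J. c j * ip P (f j) h)"
  unfolding ip_def by (simp add: sum_distrib_left sum_distrib_right mult.assoc sum.swap[of _ P])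

lemma ip_sum_right:
  "ip P f (\<lambda>p. \<Sum>j\<in>J. c j * h j p) = (\<Sum>j\<in>J. c j * ip P f (h j))"
  unfolding ip_def by (simp add: sum_distrib_left sum_distrib_right mult.commute mult.left_commute sum.swap[of _ P])

lemma ip_diff_left: "ip P (\<lambda>p. f p - g p) h = ip P f h - ip P g h"
  unfolding ip_def by (simp add: algebra_simps sum_subtractf)

lemma ip_diff_right: "ip P f (\<lambda>p. g p - h p) = ip P f g - ip P f h"
  unfolding ip_def by (simp add: algebra_simps sum_subtractf)

lemma ip_scale_left: "ip P (\<lambda>p. a * f p) h = a * ip P f h"
  unfolding ip_def by (simp add: sum_distrib_left mult.assoc)

lemma ip_scale_right: "ip P f (\<lambda>p. a * h p) = a * ip P f h"
  unfolding ip_def by (simp add: sum_distrib_left mult.left_commute)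

lemma indep_subset:
  assumes "indep P f J" "K \<subseteq> J" "finite J"
  shows "indep P f K"
  unfolding indep_def
proof (intro allI impI ballI)
  fix c j assume h: "\<forall>p\<in>P. (\<Sum>j\<in>K. c j * f j p) = 0" and j: "j \<in> K"
  define c' where "c' = (\<lambda>j. if j \<in> K then c j else 0)"
  have "\<forall>p\<in>P. (\<Sum>j\<in>J. c' j * f j p) = 0"
  proof
    fix p assume "p \<in> P"
    have "(\<Sum>j\<in>J. c' j * f j p) = (\<Sum>j\<in>K. c j * f j p)"
      using assms(2,3) by (intro sum.mono_neutral_cong_right) (auto simp: c'_def)
    then show "(\<Sum>j\<in>J. c' j * f j p) = 0" using h \<open>p\<in>P\<close> by simp
  qed
  then have "c' j = 0" using assms(1) j assms(2) unfolding indep_def by blast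
  then show "c j = 0" using j unfolding c'_def by simp
qed

lemma indep_nonzero:
  assumes "indep P f J" "j \<in> J" "finite J"
  shows "\<exists>p\<in>P. f j p \<noteq> 0"
proof (rule ccontr)
  assume "\<not> ?thesis"
  then have z: "\<forall>p\<in>P. f j p = 0" by auto
  have "indep P f {j}" using indep_subset[OF assms(1) _ assms(3)] assms(2) by auto
  then have "(\<forall>p\<in>P. (\<Sum>j'\<in>{j}. (\<lambda>_. 1::complex) j' * f j' p) = 0) \<longrightarrow> (\<forall>j'\<in>{j}. (\<lambda>_. 1::complex) j' = 0)"
    unfolding indep_def by (rule spec)
  then show False using z by simp
qed



lemma ip_add_left: "ip P (\<lambda>p. f p + g p) h = ip P f h + ip P g h"
  unfolding ip_def by (simp add: algebra_simps sum.distrib)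

lemma dual_exists:
  assumes "finite P" "finite T" "indep P f T"
  shows "\<exists>h. \<forall>a\<in>T. \<forall>b\<in>T. ip P (f b) (h a) = (if a = b then 1 else 0)"
  using assms(2,3)
proof (induction T rule: finite_induct)
  case empty
  show ?case by simp
next
  case (insert b0 T)
  have indT: "indep P f T"
    using indep_subset[OF insert.prems] insert.hyps by auto
  obtain h where h: "\<forall>a\<in>T. \<forall>b\<in>T. ip P (f b) (h a) = (if a = b then 1 else 0)"
    using insert.IH[OF indT] by blast
  define g where "g = (\<lambda>p. f b0 p - (\<Sum>j\<in>T. ip P (f b0) (h j) * f j p))"
  have g_orth: "ip P g (h a) = 0" if a: "a \<in> T" for a
  proof -
    have "(\<Sum>j\<in>T. ip P (f b0) (h j) * ip P (f j) (h a)) = (\<Sum>j\<in>T. if j = a then ip P (f b0) (h j) else 0)"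
      by (rule sum.cong) (auto simp: h a)
    also have "\<dots> = ip P (f b0) (h a)" using a insert.hyps by (simp add: sum.delta')
    finally show ?thesis unfolding g_def ip_diff_left ip_sum_left by simp
  qed
  have g_nz: "\<exists>p\<in>P. g p \<noteq> 0"
  proof (rule ccontr)
    assume "\<not> ?thesis"
    then have gz: "\<forall>p\<in>P. g p = 0" by auto
    define c where "c = (\<lambda>j. if j = b0 then 1 else - ip P (f b0) (h j))"
    have "\<forall>p\<in>P. (\<Sum>j\<in>insert b0 T. c j * f j p) = 0"
    proof
      fix p assume p: "p \<in> P"
      have "(\<Sum>j\<in>insert b0 T. c j * f j p) = f b0 p + (\<Sum>j\<in>T. c j * f j p)"
        using insert.hyps by (simp add: c_def)
      also have "(\<Sum>j\<in>T. c j * f j p) = (\<Sum>j\<in>T. - (ip P (f b0) (h j) * f j p))"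
        by (rule sum.cong) (use insert.hyps in \<open>auto simp: c_def\<close>)
      also have "f b0 p + \<dots> = g p" unfolding g_def by (simp add: sum_negf)
      finally show "(\<Sum>j\<in>insert b0 T. c j * f j p) = 0" using gz p by simp
    qed
    moreover have "(\<forall>p\<in>P. (\<Sum>j\<in>insert b0 T. c j * f j p) = 0) \<longrightarrow> (\<forall>j\<in>insert b0 T. c j = 0)"
      using insert.prems unfolding indep_def by (rule spec)
    ultimately have "c b0 = 0" by blast
    then show False by (simp add: c_def)
  qed
  define N where "N = ip P g (\<lambda>p. cnj (g p))"
  have "N = complex_of_real (\<Sum>p\<in>P. (cmod (g p))^2)"
    unfolding N_def ip_def by (simp only: of_real_sum complex_norm_square)
  moreover have "(\<Sum>p\<in>P. (cmod (g p))^2) > 0"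
  proof -
    obtain p0 where p0: "p0 \<in> P" "g p0 \<noteq> 0" using g_nz by blast
    show ?thesis by (rule sum_pos2[OF assms(1) p0(1)]) (use p0(2) in auto)
  qed
  ultimately have N_nz: "N \<noteq> 0" by (metis of_real_eq_0_iff order_less_irrefl)
  define t where "t = (\<lambda>p. inverse N * cnj (g p))"
  have gt: "ip P g t = 1" unfolding t_def ip_scale_right N_def[symmetric] using N_nz by simp
  define h0 where "h0 = (\<lambda>p. t p - (\<Sum>j\<in>T. ip P (f j) t * h j p))"
  have h0_T: "ip P (f i) h0 = 0" if i: "i \<in> T" for i
  proof -
    have "(\<Sum>j\<in>T. ip P (f j) t * ip P (f i) (h j)) = (\<Sum>j\<in>T. if j = i then ip P (f j) t else 0)"
      by (rule sum.cong) (auto simp: h i)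
    also have "\<dots> = ip P (f i) t" using i insert.hyps by (simp add: sum.delta')
    finally show ?thesis unfolding h0_def ip_diff_right ip_sum_right by simp
  qed
  have h0_g: "ip P g h0 = 1"
    unfolding h0_def ip_diff_right ip_sum_right using g_orth gt by simp
  have fb0: "f b0 = (\<lambda>p. g p + (\<Sum>j\<in>T. ip P (f b0) (h j) * f j p))"
    unfolding g_def by simp
  have h0_b0: "ip P (f b0) h0 = 1"
  proof -
    have "ip P (f b0) h0 = ip P (\<lambda>p. g p + (\<Sum>j\<in>T. ip P (f b0) (h j) * f j p)) h0"
      by (rule arg_cong[where f="\<lambda>F. ip P F h0"], rule fb0)
    also have "\<dots> = 1" by (simp add: ip_add_left ip_sum_left h0_T h0_g)
    finally show ?thesis .
  qed
  define h' where "h' = (\<lambda>a. if a = b0 then h0 else (\<lambda>p. h a p - ip P (f b0) (h a) * h0 p))"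
  have "\<forall>a\<in>insert b0 T. \<forall>b\<in>insert b0 T. ip P (f b) (h' a) = (if a = b then 1 else 0)"
  proof (intro ballI)
    fix a b assume a: "a \<in> insert b0 T" and b: "b \<in> insert b0 T"
    show "ip P (f b) (h' a) = (if a = b then 1 else 0)"
    proof (cases "a = b0")
      case True
      then show ?thesis using b h0_b0 h0_T insert.hyps unfolding h'_def by auto
    next
      case False
      then have aT: "a \<in> T" using a by simp
      have "ip P (f b) (h' a) = ip P (f b) (h a) - ip P (f b0) (h a) * ip P (f b) h0"
        unfolding h'_def using False by (simp add: ip_diff_right ip_scale_right)
      then show ?thesis using b h0_b0 h0_T h aT False insert.hyps by auto
    qed
  qed
  then show ?case by blast
qed

lemma indep_card_le:
  assumes "finite D" "finite C" "indep D t C"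
  shows "card C \<le> card D"
  using assms
proof (induction D arbitrary: t C rule: finite_induct)
  case empty
  have "C = {}"
  proof (rule ccontr)
    assume "C \<noteq> {}"
    then obtain j where j: "j \<in> C" by auto
    have "(\<forall>p\<in>{}. (\<Sum>j\<in>C. (\<lambda>_. 1::complex) j * t j p) = 0) \<longrightarrow> (\<forall>j\<in>C. (\<lambda>_. 1::complex) j = 0)"
      using empty.prems(2) unfolding indep_def by (rule spec)
    then show False using j by simp
  qed
  then show ?case by simp
next
  case (insert x D)
  show ?case
  proof (cases "\<forall>c\<in>C. t c x = 0")
    case True
    have "indep D t C"
      unfolding indep_def
    proof (intro allI impI)
      fix c assume h: "\<forall>p\<in>D. (\<Sum>j\<in>C. c j * t j p) = 0"
      have "\<forall>p\<in>insert x D. (\<Sum>j\<in>C. c j * t j p) = 0" using h True by simp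
      moreover have "(\<forall>p\<in>insert x D. (\<Sum>j\<in>C. c j * t j p) = 0) \<longrightarrow> (\<forall>j\<in>C. c j = 0)"
        using insert.prems(2) unfolding indep_def by (rule spec)
      ultimately show "\<forall>j\<in>C. c j = 0" by blast
    qed
    then have "card C \<le> card D" using insert.IH insert.prems by blast
    then show ?thesis using insert.hyps by simp
  next
    case False
    then obtain c0 where c0: "c0 \<in> C" "t c0 x \<noteq> 0" by auto
    define t' where "t' = (\<lambda>c p. t c p - (t c x / t c0 x) * t c0 p)"
    define C' where "C' = C - {c0}"
    have "indep D t' C'"
      unfolding indep_def
    proof (intro allI impI)
      fix \<alpha> assume h: "\<forall>p\<in>D. (\<Sum>j\<in>C'. \<alpha> j * t' j p) = 0"
      define \<beta> where "\<beta> = (\<lambda>c. if c = c0 then - (\<Sum>j\<in>C'. \<alpha> j * t j x) / t c0 x else \<alpha> c)"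
      have ident: "(\<Sum>j\<in>C. \<beta> j * t j p) = (\<Sum>j\<in>C'. \<alpha> j * t' j p)" for p
      proof -
        have "(\<Sum>j\<in>C. \<beta> j * t j p) = \<beta> c0 * t c0 p + (\<Sum>j\<in>C'. \<beta> j * t j p)"
          unfolding C'_def using c0 insert.prems(1) by (simp add: sum.remove)
        also have "(\<Sum>j\<in>C'. \<beta> j * t j p) = (\<Sum>j\<in>C'. \<alpha> j * t j p)"
          by (rule sum.cong) (auto simp: \<beta>_def C'_def)
        finally have e1: "(\<Sum>j\<in>C. \<beta> j * t j p) = \<beta> c0 * t c0 p + (\<Sum>j\<in>C'. \<alpha> j * t j p)" .
        have "(\<Sum>j\<in>C'. \<alpha> j * t' j p) = (\<Sum>j\<in>C'. \<alpha> j * t j p - (\<alpha> j * t j x) * (t c0 p / t c0 x))"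
          by (rule sum.cong) (simp_all add: t'_def algebra_simps)
        also have "\<dots> = (\<Sum>j\<in>C'. \<alpha> j * t j p) - (\<Sum>j\<in>C'. \<alpha> j * t j x) * (t c0 p / t c0 x)"
          by (simp add: sum_subtractf sum_distrib_right sum_divide_distrib)
        finally have e2: "(\<Sum>j\<in>C'. \<alpha> j * t' j p) = (\<Sum>j\<in>C'. \<alpha> j * t j p) - (\<Sum>j\<in>C'. \<alpha> j * t j x) * (t c0 p / t c0 x)" .
        have e3: "\<beta> c0 * t c0 p = - ((\<Sum>j\<in>C'. \<alpha> j * t j x) * (t c0 p / t c0 x))"
          unfolding \<beta>_def by simp
        show ?thesis unfolding e1 e2 e3 by simp
      qed
      have "\<forall>p\<in>insert x D. (\<Sum>j\<in>C. \<beta> j * t j p) = 0"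
      proof
        fix p assume "p \<in> insert x D"
        moreover have "(\<Sum>j\<in>C'. \<alpha> j * t' j x) = 0" unfolding t'_def using c0 by simp
        ultimately show "(\<Sum>j\<in>C. \<beta> j * t j p) = 0" using h ident by auto
      qed
      moreover have "(\<forall>p\<in>insert x D. (\<Sum>j\<in>C. \<beta> j * t j p) = 0) \<longrightarrow> (\<forall>j\<in>C. \<beta> j = 0)"
        using insert.prems(2) unfolding indep_def by (rule spec)
      ultimately have "\<forall>j\<in>C. \<beta> j = 0" by blast
      then show "\<forall>j\<in>C'. \<alpha> j = 0"
      proof (intro ballI)
        fix j assume j: "j \<in> C'"
        then have "j \<noteq> c0" "j \<in> C" unfolding C'_def by auto
        with \<open>\<forall>j\<in>C. \<beta> j = 0\<close> show "\<alpha> j = 0" unfolding \<beta>_def by force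
      qed
    qed
    then have "card C' \<le> card D" using insert.IH insert.prems unfolding C'_def by blast
    moreover have "card C = Suc (card C')"
    proof -
      have "card C' = card C - 1" unfolding C'_def using c0 insert.prems(1) by simp
      moreover have "card C > 0" using c0 insert.prems(1) card_gt_0_iff by blast
      ultimately show ?thesis by simp
    qed
    ultimately show ?thesis using insert.hyps by simp
  qed
qed

lemma span_card_le:
  assumes "finite A" "finite B" "indep P W A"
    and "\<forall>a\<in>A. \<forall>p\<in>P. W a p = (\<Sum>b\<in>B. s a b * Z b p)"
  shows "card A \<le> card B"
proof -
  have "indep B s A"
    unfolding indep_def
  proof (intro allI impI)
    fix \<alpha> assume h: "\<forall>b\<in>B. (\<Sum>a\<in>A. \<alpha> a * s a b) = 0"
    have "\<forall>p\<in>P. (\<Sum>a\<in>A. \<alpha> a * W a p) = 0"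
    proof
      fix p assume p: "p \<in> P"
      have "(\<Sum>a\<in>A. \<alpha> a * W a p) = (\<Sum>a\<in>A. \<alpha> a * (\<Sum>b\<in>B. s a b * Z b p))"
        using assms(4) p by simp
      also have "\<dots> = (\<Sum>b\<in>B. (\<Sum>a\<in>A. \<alpha> a * s a b) * Z b p)"
        by (simp add: sum_distrib_left sum_distrib_right mult.assoc sum.swap[of _ A])
      also have "\<dots> = 0" using h by simp
      finally show "(\<Sum>a\<in>A. \<alpha> a * W a p) = 0" .
    qed
    moreover have "(\<forall>p\<in>P. (\<Sum>a\<in>A. \<alpha> a * W a p) = 0) \<longrightarrow> (\<forall>a\<in>A. \<alpha> a = 0)"
      using assms(3) unfolding indep_def by (rule spec)
    ultimately show "\<forall>a\<in>A. \<alpha> a = 0" by blast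
  qed
  then show ?thesis using indep_card_le assms(1,2) by blast
qed



lemma contract:
  assumes "finite S" "U \<subseteq> S" "\<forall>j\<in>U. ip Q (b j) \<psi> = 0"
  shows "ip Q (\<lambda>q. \<Sum>j\<in>S. c j * a j p * b j q) \<psi> = (\<Sum>j\<in>S-U. (c j * ip Q (b j) \<psi>) * a j p)"
proof -
  have "ip Q (\<lambda>q. \<Sum>j\<in>S. c j * a j p * b j q) \<psi> = (\<Sum>j\<in>S. (c j * a j p) * ip Q (b j) \<psi>)"
    by (rule ip_sum_left)
  also have "\<dots> = (\<Sum>j\<in>S-U. (c j * a j p) * ip Q (b j) \<psi>)"
    using assms by (intro sum.mono_neutral_right) auto
  finally show ?thesis by (simp add: algebra_simps)
qed

lemma ip_zero_left: "ip Q (\<lambda>q. 0) \<psi> = 0" unfolding ip_def by simp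

lemma R1:
  assumes "finite S" "\<forall>j\<in>S. c j \<noteq> 0" "U \<subseteq> S" "j0 \<in> S - U" "finite Q"
    "indep Q b (insert j0 U)" "indep P a (S - U)"
  shows "\<exists>p\<in>P. \<exists>q\<in>Q. (\<Sum>j\<in>S. c j * a j p * b j q) \<noteq> 0"
proof (rule ccontr)
  assume "\<not> ?thesis"
  then have z: "\<forall>p\<in>P. \<forall>q\<in>Q. (\<Sum>j\<in>S. c j * a j p * b j q) = 0" by auto
  have fin: "finite (insert j0 U)" using assms(1,3) finite_subset by blast
  obtain h where h: "\<forall>x\<in>insert j0 U. \<forall>y\<in>insert j0 U. ip Q (b y) (h x) = (if x = y then 1 else 0)"
    using dual_exists[OF assms(5) fin assms(6)] by blast
  have hU: "\<forall>j\<in>U. ip Q (b j) (h j0) = 0" using h assms(4) by auto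
  have "\<forall>p\<in>P. (\<Sum>j\<in>S-U. (c j * ip Q (b j) (h j0)) * a j p) = 0"
  proof
    fix p assume p: "p \<in> P"
    have "(\<Sum>j\<in>S-U. (c j * ip Q (b j) (h j0)) * a j p) = ip Q (\<lambda>q. \<Sum>j\<in>S. c j * a j p * b j q) (h j0)"
      by (rule contract[OF assms(1,3) hU, symmetric])
    also have "\<dots> = ip Q (\<lambda>q. 0) (h j0)"
      unfolding ip_def using z p by simp
    finally show "(\<Sum>j\<in>S-U. (c j * ip Q (b j) (h j0)) * a j p) = 0" by (simp add: ip_zero_left)
  qed
  moreover have "(\<forall>p\<in>P. (\<Sum>j\<in>S-U. (\<lambda>j. c j * ip Q (b j) (h j0)) j * a j p) = 0) \<longrightarrow>
      (\<forall>j\<in>S-U. (\<lambda>j. c j * ip Q (b j) (h j0)) j = 0)"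
    using assms(7) unfolding indep_def by (rule spec)
  ultimately have "c j0 * ip Q (b j0) (h j0) = 0" using assms(4) by auto
  then show False using h assms(2,4) by auto
qed

lemma R2:
  assumes "finite S" "\<forall>j\<in>S. c j \<noteq> 0" "U \<subseteq> S" "j1 \<in> S - U" "j2 \<in> S - U" "j1 \<noteq> j2"
    "finite Q" "indep Q b (insert j1 (insert j2 U))" "indep P a (S - U)"
    "\<forall>p\<in>P. \<forall>q\<in>Q. (\<Sum>j\<in>S. c j * a j p * b j q) = x p * y q"
  shows False
proof -
  let ?T = "insert j1 (insert j2 U)"
  have fin: "finite ?T" using assms(1,3) finite_subset by blast
  obtain h where h: "\<forall>s\<in>?T. \<forall>t\<in>?T. ip Q (b t) (h s) = (if s = t then 1 else 0)"
    using dual_exists[OF assms(7) fin assms(8)] by blast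
  have key: "(\<Sum>j\<in>S-U. (c j * ip Q (b j) (h jk)) * a j p) = x p * ip Q y (h jk)"
    if jk: "jk = j1 \<or> jk = j2" and p: "p \<in> P" for jk p
  proof -
    have hU: "\<forall>j\<in>U. ip Q (b j) (h jk) = 0" using h jk assms(4,5) by auto
    have "(\<Sum>j\<in>S-U. (c j * ip Q (b j) (h jk)) * a j p) = ip Q (\<lambda>q. \<Sum>j\<in>S. c j * a j p * b j q) (h jk)"
      by (rule contract[OF assms(1,3) hU, symmetric])
    also have "\<dots> = ip Q (\<lambda>q. x p * y q) (h jk)"
      unfolding ip_def using assms(10) p by simp
    finally show ?thesis by (simp add: ip_scale_left)
  qed
  define E1 where "E1 = ip Q y (h j1)"
  define E2 where "E2 = ip Q y (h j2)"
  define e1 where "e1 = (\<lambda>j. ip Q (b j) (h j1))"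
  define e2 where "e2 = (\<lambda>j. ip Q (b j) (h j2))"
  have e: "e1 j1 = 1" "e1 j2 = 0" "e2 j1 = 0" "e2 j2 = 1"
    unfolding e1_def e2_def using h assms(6) by auto
  have ind: "\<And>\<gamma>. (\<forall>p\<in>P. (\<Sum>j\<in>S-U. \<gamma> j * a j p) = 0) \<Longrightarrow> (\<forall>j\<in>S-U. \<gamma> j = 0)"
    using assms(9) unfolding indep_def by blast
  have "\<forall>p\<in>P. (\<Sum>j\<in>S-U. (c j * (E2 * e1 j - E1 * e2 j)) * a j p) = 0"
  proof
    fix p assume p: "p \<in> P"
    have "(\<Sum>j\<in>S-U. (c j * (E2 * e1 j - E1 * e2 j)) * a j p)
        = E2 * (\<Sum>j\<in>S-U. (c j * e1 j) * a j p) - E1 * (\<Sum>j\<in>S-U. (c j * e2 j) * a j p)"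
      by (simp add: sum_distrib_left sum_subtractf algebra_simps)
    also have "\<dots> = E2 * (x p * E1) - E1 * (x p * E2)"
      using key[OF _ p, of j1] key[OF _ p, of j2] unfolding e1_def e2_def E1_def E2_def by simp
    finally show "(\<Sum>j\<in>S-U. (c j * (E2 * e1 j - E1 * e2 j)) * a j p) = 0" by simp
  qed
  then have co: "\<forall>j\<in>S-U. c j * (E2 * e1 j - E1 * e2 j) = 0" by (rule ind)
  have "c j1 * (E2 * e1 j1 - E1 * e2 j1) = 0" using co assms(4) by blast
  then have "E2 = 0" using e assms(2,4) by simp
  moreover have "c j2 * (E2 * e1 j2 - E1 * e2 j2) = 0" using co assms(5) by blast
  then have "E1 = 0" using e assms(2,5) by simp
  ultimately have "\<forall>p\<in>P. (\<Sum>j\<in>S-U. (c j * e1 j) * a j p) = 0"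
    using key[of j1] unfolding e1_def E1_def by simp
  then have "\<forall>j\<in>S-U. c j * e1 j = 0" by (rule ind)
  then show False using assms(2,4) e by auto
qed



definition VP :: "(nat \<Rightarrow> nat) \<Rightarrow> nat \<Rightarrow> nat list set" where
  "VP n m = {is. valid_idx n m is}"

definition WI :: "(nat \<Rightarrow> nat \<Rightarrow> nat \<Rightarrow> complex) \<Rightarrow> nat set \<Rightarrow> nat \<Rightarrow> nat list \<Rightarrow> complex" where
  "WI u I j is = (\<Prod>i\<in>I. u j i (is ! i))"

lemma finite_VP: "finite (VP n m)"
proof -
  have "VP n m \<subseteq> {xs. set xs \<subseteq> {..<(\<Sum>i<m. n i)} \<and> length xs = m}"
  proof
    fix xs assume "xs \<in> VP n m"
    then have l: "length xs = m" and b: "\<forall>k<m. xs ! k < n k" unfolding VP_def valid_idx_def by auto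
    have "set xs \<subseteq> {..<(\<Sum>i<m. n i)}"
    proof
      fix y assume "y \<in> set xs"
      then obtain k where k: "k < m" "xs ! k = y" using l by (auto simp: in_set_conv_nth)
      have "n k \<le> (\<Sum>i<m. n i)" using k(1) by (intro member_le_sum) auto
      then show "y \<in> {..<(\<Sum>i<m. n i)}" using b k by fastforce
    qed
    then show "xs \<in> {xs. set xs \<subseteq> {..<(\<Sum>i<m. n i)} \<and> length xs = m}" using l by simp
  qed
  then show ?thesis using finite_lists_length_eq[of "{..<(\<Sum>i<m. n i)}" m] finite_subset by blast
qed

lemma VP_update:
  assumes "p \<in> VP n m" "i0 < m" "q < n i0"
  shows "p[i0 := q] \<in> VP n m"
  using assms unfolding VP_def valid_idx_def by (auto simp: nth_list_update)

lemma VP_base: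
  assumes "\<forall>i<m. n i > 0"
  shows "replicate m 0 \<in> VP n m"
  using assms unfolding VP_def valid_idx_def by auto

lemma VP_length: "p \<in> VP n m \<Longrightarrow> length p = m"
  unfolding VP_def valid_idx_def by auto

lemma prod_update_notin:
  assumes "i0 \<notin> I"
  shows "(\<Prod>i\<in>I. f i ((p[i0 := q]) ! i)) = (\<Prod>i\<in>I. f i (p ! i))"
  by (intro prod.cong refl) (metis assms nth_list_update_neq)

lemma prod_update_insert:
  assumes "i0 \<notin> I" "finite I" "i0 < length p"
  shows "(\<Prod>i\<in>insert i0 I. f i ((p[i0 := q]) ! i)) = f i0 q * (\<Prod>i\<in>I. f i (p ! i))"
  using assms by (simp add: prod_update_notin[OF assms(1)])

lemma K_lemma:
  assumes kr: "\<forall>i<m. \<forall>J. J \<subseteq> {..<r} \<and> card J \<le> k i \<longrightarrow> indep {..<n i} (\<lambda>j. u j i) J"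
    and k1: "\<forall>i<m. k i \<ge> 1" and npos: "\<forall>i<m. n i > 0"
  shows "finite I \<Longrightarrow> I \<subseteq> {..<m} \<Longrightarrow> I \<noteq> {} \<Longrightarrow> J \<subseteq> {..<r} \<Longrightarrow>
     card J + card I \<le> sum k I + 1 \<Longrightarrow> indep (VP n m) (WI u I) J"
proof (induction I arbitrary: J rule: finite_induct)
  case empty
  then show ?case by simp
next
  case (insert i0 I)
  have i0m: "i0 < m" using insert.prems by auto
  have finJ: "finite J" using insert.prems(3) finite_subset by blast
  show ?case
  proof (cases "I = {}")
    case True
    have cJ: "card J \<le> k i0" using insert.prems True by simp
    have ind0: "indep {..<n i0} (\<lambda>j. u j i0) J" using kr i0m insert.prems(3) cJ by blast
    show ?thesis unfolding indep_def
    proof (intro allI impI)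
      fix c assume h: "\<forall>p\<in>VP n m. (\<Sum>j\<in>J. c j * WI u (insert i0 I) j p) = 0"
      have "\<forall>x\<in>{..<n i0}. (\<Sum>j\<in>J. c j * u j i0 x) = 0"
      proof
        fix x assume x: "x \<in> {..<n i0}"
        let ?p = "(replicate m 0)[i0 := x]"
        have "?p \<in> VP n m" using VP_update[OF VP_base[OF npos] i0m] x by simp
        then have "(\<Sum>j\<in>J. c j * WI u (insert i0 I) j ?p) = 0" using h by blast
        then show "(\<Sum>j\<in>J. c j * u j i0 x) = 0" using True i0m by (simp add: WI_def)
      qed
      then show "\<forall>j\<in>J. c j = 0" using ind0 unfolding indep_def by blast
    qed
  next
    case False
    have IH: "indep (VP n m) (WI u I) J'" if "J' \<subseteq> {..<r}" "card J' + card I \<le> sum k I + 1" for J'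
      using insert.IH insert.prems False that by blast
    have sumI: "sum k I \<ge> card I"
    proof -
      have "sum (\<lambda>_. 1::nat) I \<le> sum k I" using k1 insert.prems(1) by (intro sum_mono) auto
      then show ?thesis by simp
    qed
    have hyp: "card J + card I \<le> k i0 + sum k I"
      using insert.prems(4) insert.hyps by simp
    define KI where "KI = sum k I + 1 - card I"
    have KI1: "KI \<ge> 1" unfolding KI_def using sumI by simp
    show ?thesis unfolding indep_def
    proof (intro allI impI)
      fix c assume h: "\<forall>p\<in>VP n m. (\<Sum>j\<in>J. c j * WI u (insert i0 I) j p) = 0"
      show "\<forall>j\<in>J. c j = 0"
      proof (rule ccontr)
        assume "\<not> (\<forall>j\<in>J. c j = 0)"
        define S where "S = {j\<in>J. c j \<noteq> 0}"
        have SJ: "S \<subseteq> J" and finS: "finite S" and S0: "S \<noteq> {}" and cS: "\<forall>j\<in>S. c j \<noteq> 0"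
          unfolding S_def using finJ \<open>\<not> (\<forall>j\<in>J. c j = 0)\<close> by auto
        have cardS1: "card S \<ge> 1" using finS S0 by (simp add: Suc_le_eq card_gt_0_iff)
        have h': "\<forall>p\<in>VP n m. (\<Sum>j\<in>S. c j * WI u (insert i0 I) j p) = 0"
        proof
          fix p assume p: "p \<in> VP n m"
          have "(\<Sum>j\<in>S. c j * WI u (insert i0 I) j p) = (\<Sum>j\<in>J. c j * WI u (insert i0 I) j p)"
            using finJ SJ by (intro sum.mono_neutral_left) (auto simp: S_def)
          then show "(\<Sum>j\<in>S. c j * WI u (insert i0 I) j p) = 0" using h p by simp
        qed
        obtain U where U: "U \<subseteq> S" "card U = card S - KI" "finite U"
          using obtain_subset_with_card_n[of "card S - KI" S] by auto
        have cSU: "card (S - U) = card S - card U" using U finS by (simp add: card_Diff_subset)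
        have "card (S - U) \<ge> 1" using cSU U(2) KI1 cardS1 by simp
        then obtain j0 where j0: "j0 \<in> S - U" by (metis card.empty empty_iff not_one_le_zero subsetI subset_antisym)
        have "card S \<le> card J" using SJ finJ card_mono by blast
        have indA: "indep (VP n m) (WI u I) (S - U)"
          by (rule IH) (use SJ insert.prems(3) cSU U(2) KI_def sumI in auto)
        have cins: "card (insert j0 U) = card U + 1" using j0 U(3) by simp
        have indB: "indep {..<n i0} (\<lambda>j. u j i0) (insert j0 U)"
        proof -
          have "insert j0 U \<subseteq> {..<r}" using j0 U(1) SJ insert.prems(3) by auto
          moreover have "card (insert j0 U) \<le> k i0"
            using cins U(2) \<open>card S \<le> card J\<close> hyp KI_def sumI k1 i0m by auto
          ultimately show ?thesis using kr i0m by blast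
        qed
        obtain p q where pq: "p \<in> VP n m" "q \<in> {..<n i0}"
          "(\<Sum>j\<in>S. c j * WI u I j p * u j i0 q) \<noteq> 0"
          using R1[OF finS cS U(1) j0 _ indB indA] by blast
        have p': "p[i0 := q] \<in> VP n m" using VP_update[OF pq(1) i0m] pq(2) by simp
        have lp: "i0 < length p" using VP_length[OF pq(1)] i0m by simp
        have "WI u (insert i0 I) j (p[i0 := q]) = u j i0 q * WI u I j p" for j
          unfolding WI_def by (rule prod_update_insert[OF insert.hyps(2,1) lp])
        then have "(\<Sum>j\<in>S. c j * WI u (insert i0 I) j (p[i0 := q])) = (\<Sum>j\<in>S. c j * WI u I j p * u j i0 q)"
          by (simp add: algebra_simps)
        then show False using h' p' pq(3) by simp
      qed
    qed
  qed
qed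



lemma two_elems:
  assumes "2 \<le> card A"
  obtains a b where "a \<in> A" "b \<in> A" "a \<noteq> b"
proof -
  obtain T where T: "T \<subseteq> A" "card T = 2" using obtain_subset_with_card_n[OF assms] by blast
  then obtain a b where "T = {a, b}" "a \<noteq> b" by (meson card_2_iff)
  then show ?thesis using that T(1) by auto
qed

lemma L2:
  assumes kr: "\<forall>i<m. \<forall>J. J \<subseteq> {..<r} \<and> card J \<le> k i \<longrightarrow> indep {..<n i} (\<lambda>j. u j i) J"
    and k1: "\<forall>i<m. k i \<ge> 1" and npos: "\<forall>i<m. n i > 0"
    and kr_le: "\<forall>i<m. k i \<le> r" and m1: "m > 1" and ksum: "r + m \<le> (\<Sum>i<m. k i)"
    and zdef: "\<forall>is\<in>VP n m. (\<Prod>i<m. v i (is ! i)) = (\<Sum>j<r. d j * WI u {..<m} j is)"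
    and nz: "\<exists>is\<in>VP n m. (\<Prod>i<m. v i (is ! i)) \<noteq> 0"
  shows "\<exists>j0<r. \<forall>j<r. j \<noteq> j0 \<longrightarrow> d j = 0"
proof -
  define S where "S = {j. j < r \<and> d j \<noteq> 0}"
  have finS: "finite S" and Sr: "S \<subseteq> {..<r}" and cS: "\<forall>j\<in>S. d j \<noteq> 0" unfolding S_def by auto
  have zS: "\<forall>is\<in>VP n m. (\<Prod>i<m. v i (is ! i)) = (\<Sum>j\<in>S. d j * WI u {..<m} j is)"
  proof
    fix p assume p: "p \<in> VP n m"
    have "(\<Sum>j\<in>S. d j * WI u {..<m} j p) = (\<Sum>j<r. d j * WI u {..<m} j p)"
      using Sr by (intro sum.mono_neutral_left) (auto simp: S_def)
    then show "(\<Prod>i<m. v i (p ! i)) = (\<Sum>j\<in>S. d j * WI u {..<m} j p)" using zdef p by simp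
  qed
  have S0: "S \<noteq> {}"
  proof
    assume "S = {}"
    then show False using zS nz by simp
  qed
  have r1: "r \<ge> 1" using S0 Sr by auto
  show ?thesis
  proof (cases "card S \<le> 1")
    case True
    then have "card S = 1" using S0 finS by (simp add: le_Suc_eq card_gt_0_iff)
    then obtain j0 where "S = {j0}" by (meson card_1_singletonE)
    then show ?thesis unfolding S_def by auto
  next
    case False
    then have cS2: "card S \<ge> 2" by simp
    have "\<exists>i0<m. k i0 \<ge> 2"
    proof (rule ccontr)
      assume "\<not> ?thesis"
      then have "\<forall>i<m. k i \<le> 1" by auto
      then have "(\<Sum>i<m. k i) \<le> (\<Sum>i<m. 1)" by (intro sum_mono) auto
      then show False using ksum r1 by simp
    qed
    then obtain i0 where i0: "i0 < m" "k i0 \<ge> 2" by blast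
    define I where "I = {..<m} - {i0}"
    have finI: "finite I" and Im: "I \<subseteq> {..<m}" unfolding I_def by auto
    have cI: "card I = m - 1" unfolding I_def using i0 by simp
    have I0: "I \<noteq> {}" using cI m1 by (metis card.empty diff_is_0_eq linorder_not_le)
    have mI: "{..<m} = insert i0 I" and i0I: "i0 \<notin> I" unfolding I_def using i0 by auto
    have sumI: "(\<Sum>i<m. k i) = k i0 + sum k I" unfolding mI using finI i0I by simp
    define KI where "KI = sum k I + 2 - m"
    have KI2: "KI + k i0 \<ge> r + 2" using sumI ksum unfolding KI_def by simp
    have KI2': "KI \<ge> 2" using KI2 kr_le i0 by fastforce
    obtain U where U: "U \<subseteq> S" "card U = card S - KI" "finite U"
      using obtain_subset_with_card_n[of "card S - KI" S] by auto
    have cSU: "card (S - U) = card S - card U" using U finS by (simp add: card_Diff_subset)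
    then have "card (S - U) \<ge> 2" using U(2) KI2' cS2 by simp
    then obtain j1 j2 where j12: "j1 \<in> S - U" "j2 \<in> S - U" "j1 \<noteq> j2" by (rule two_elems)
    have cSr: "card S \<le> r" using card_mono[OF _ Sr] by simp
    have indA: "indep (VP n m) (WI u I) (S - U)"
      by (rule K_lemma[OF kr k1 npos finI Im I0]) (use Sr cSU U(2) KI_def cI sumI ksum kr_le i0 m1 in auto)
    have indB: "indep {..<n i0} (\<lambda>j. u j i0) (insert j1 (insert j2 U))"
    proof -
      have "insert j1 (insert j2 U) \<subseteq> {..<r}" using j12 U(1) Sr by auto
      moreover have "card (insert j1 (insert j2 U)) \<le> card U + 2"
        using U(3) by (auto simp: card_insert_if)
      moreover have "card U + 2 \<le> k i0" using U(2) KI2 cSr i0(2) by simp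
      ultimately show ?thesis using kr i0(1) by auto
    qed
    have rank1: "\<forall>p\<in>VP n m. \<forall>q\<in>{..<n i0}. (\<Sum>j\<in>S. d j * WI u I j p * u j i0 q)
        = (\<Prod>i\<in>I. v i (p ! i)) * v i0 q"
    proof (intro ballI)
      fix p q assume p: "p \<in> VP n m" and q: "q \<in> {..<n i0}"
      have p': "p[i0 := q] \<in> VP n m" using VP_update[OF p i0(1)] q by simp
      have lp: "i0 < length p" using VP_length[OF p] i0 by simp
      have "(\<Prod>i<m. v i (p[i0 := q] ! i)) = v i0 q * (\<Prod>i\<in>I. v i (p ! i))"
        unfolding mI by (rule prod_update_insert[OF i0I finI lp])
      moreover have "WI u {..<m} j (p[i0 := q]) = u j i0 q * WI u I j p" for j
        unfolding WI_def mI by (rule prod_update_insert[OF i0I finI lp])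
      ultimately show "(\<Sum>j\<in>S. d j * WI u I j p * u j i0 q) = (\<Prod>i\<in>I. v i (p ! i)) * v i0 q"
        using zS p' by (simp add: algebra_simps)
    qed
    show ?thesis
      using R2[OF finS cS U(1) j12 _ indB indA rank1] by simp
  qed
qed

lemma PF:
  fixes w v :: "nat \<Rightarrow> nat \<Rightarrow> complex" and d :: complex
  assumes wnz: "\<forall>i<m. \<exists>x<n i. w i x \<noteq> 0" and d: "d \<noteq> 0"
    and eq: "\<forall>is\<in>VP n m. (\<Prod>i<m. v i (is ! i)) = d * (\<Prod>i<m. w i (is ! i))"
  shows "\<exists>c. (\<forall>i<m. \<forall>x<n i. v i x = c i * w i x) \<and> (\<Prod>i<m. c i) = d"
proof -
  obtain xs where xs: "\<forall>i<m. xs i < n i \<and> w i (xs i) \<noteq> 0" using wnz by metis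
  define e where "e = map xs [0..<m]"
  have eV: "e \<in> VP n m" unfolding e_def VP_def valid_idx_def using xs by auto
  have en: "\<And>i. i < m \<Longrightarrow> e ! i = xs i" unfolding e_def by simp
  have le: "length e = m" unfolding e_def by simp
  define c where "c = (\<lambda>i. v i (xs i) / w i (xs i))"
  have cw: "v i x = c i * w i x" if i: "i < m" and x: "x < n i" for i x
  proof -
    define I where "I = {..<m} - {i}"
    have finI: "finite I" and iI: "i \<notin> I" and mI: "{..<m} = insert i I" unfolding I_def using i by auto
    have lp: "i < length e" using le i by simp
    define Rv where "Rv = (\<Prod>k\<in>I. v k (e ! k))"
    define Rw where "Rw = (\<Prod>k\<in>I. w k (e ! k))"
    have ident: "v i y * Rv = d * (w i y * Rw)" if y: "y < n i" for y
    proof -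
      have "e[i := y] \<in> VP n m" using VP_update[OF eV i y] .
      then have "(\<Prod>k<m. v k (e[i := y] ! k)) = d * (\<Prod>k<m. w k (e[i := y] ! k))" using eq by blast
      then show ?thesis unfolding mI prod_update_insert[OF iI finI lp] Rv_def Rw_def .
    qed
    have Rw0: "Rw \<noteq> 0" unfolding Rw_def using xs en finI I_def by (auto simp: prod_zero_iff)
    have i1: "v i (xs i) * Rv = d * (w i (xs i) * Rw)" using ident xs i by blast
    have Rv0: "Rv \<noteq> 0" using i1 d Rw0 xs i by auto
    have i2: "v i x * Rv = d * (w i x * Rw)" using ident x by blast
    have "v i x = d * w i x * Rw / Rv" using i2 Rv0 by (simp add: field_simps)
    moreover have "v i (xs i) = d * w i (xs i) * Rw / Rv" using i1 Rv0 by (simp add: field_simps)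
    ultimately show ?thesis unfolding c_def using xs i by (simp add: field_simps)
  qed
  have Pw: "(\<Prod>k<m. w k (e ! k)) \<noteq> 0" using xs en by (auto simp: prod_zero_iff)
  have "(\<Prod>k<m. v k (e ! k)) = (\<Prod>k<m. c k) * (\<Prod>k<m. w k (e ! k))"
    using cw xs en by (simp add: prod.distrib[symmetric])
  moreover have "(\<Prod>k<m. v k (e ! k)) = d * (\<Prod>k<m. w k (e ! k))" using eq eV by blast
  ultimately have "(\<Prod>k<m. c k) = d" using Pw by simp
  then show ?thesis using cw by blast
qed



lemma lin_indep_on_indep: "lin_indep_on d S J \<longleftrightarrow> indep {..<d} S J"
  unfolding lin_indep_on_def indep_def by (simp add: Ball_def)

lemma kr_props:
  assumes nz: "\<forall>j<r. \<exists>x<d. S j x \<noteq> 0" and r1: "r \<ge> 1"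
  shows "kruskal_rank d r S \<le> r" "kruskal_rank d r S \<ge> 1"
    "\<forall>J. J \<subseteq> {..<r} \<and> card J \<le> kruskal_rank d r S \<longrightarrow> indep {..<d} S J"
proof -
  define P where "P = (\<lambda>k. k \<le> r \<and> (\<forall>J. J \<subseteq> {..<r} \<and> card J = k \<longrightarrow> lin_indep_on d S J))"
  have kdef: "kruskal_rank d r S = Greatest P" unfolding kruskal_rank_def P_def by simp
  have P0: "P 0" unfolding P_def
  proof (intro conjI allI impI)
    show "0 \<le> r" by simp
    fix J assume "J \<subseteq> {..<r} \<and> card J = 0"
    then have "J = {}" using finite_subset[of J "{..<r}"] by auto
    then show "lin_indep_on d S J" unfolding lin_indep_on_def by simp
  qed
  have bnd: "\<And>y. P y \<Longrightarrow> y \<le> r" unfolding P_def by simp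
  have PG: "P (Greatest P)" by (rule GreatestI_nat[of P 0 r, OF P0 bnd])
  have P1: "P 1"
    unfolding P_def
  proof (intro conjI allI impI)
    show "1 \<le> r" using r1 .
    fix J assume J: "J \<subseteq> {..<r} \<and> card J = 1"
    then obtain j where j: "J = {j}" by (meson card_1_singletonE)
    then have jr: "j < r" using J by auto
    obtain x where x: "x < d" "S j x \<noteq> 0" using nz jr by blast
    show "lin_indep_on d S J" unfolding lin_indep_on_def j using x by auto
  qed
  show "kruskal_rank d r S \<le> r" using PG bnd kdef by simp
  show "kruskal_rank d r S \<ge> 1" unfolding kdef by (rule Greatest_le_nat[of P 1 r, OF P1 bnd])
  show "\<forall>J. J \<subseteq> {..<r} \<and> card J \<le> kruskal_rank d r S \<longrightarrow> indep {..<d} S J"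
  proof (intro allI impI)
    fix J assume J: "J \<subseteq> {..<r} \<and> card J \<le> kruskal_rank d r S"
    let ?K = "kruskal_rank d r S"
    have Kr: "?K \<le> r" using PG bnd kdef by simp
    have finJ: "finite J" using J finite_subset by blast
    have "card ({..<r} - J) = r - card J" using J finJ by (simp add: card_Diff_subset)
    then have "?K - card J \<le> card ({..<r} - J)" using Kr by simp
    then obtain T where T: "T \<subseteq> {..<r} - J" "card T = ?K - card J" "finite T"
      using obtain_subset_with_card_n by metis
    have "J \<inter> T = {}" using T(1) by blast
    have "card (J \<union> T) = card J + card T" by (rule card_Un_disjoint[OF finJ T(3) \<open>J \<inter> T = {}\<close>])
    then have "card (J \<union> T) = ?K" using T(2) J by simp
    moreover have "J \<union> T \<subseteq> {..<r}" using T J by auto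
    ultimately have "lin_indep_on d S (J \<union> T)" using PG kdef unfolding P_def by auto
    then show "indep {..<d} S J" unfolding lin_indep_on_indep
      using indep_subset[of "{..<d}" S "J \<union> T" J] T(3) finJ by auto
  qed
qed

lemma herm_sum_eq:
  "herm_sum m r lam u is js = (\<Sum>j<r. complex_of_real (lam j) * (WI u {..<m} j is * cnj (WI u {..<m} j js)))"
  unfolding herm_sum_def herm_outer_def WI_def by (simp add: prod.distrib)

lemma ip_cnj: "ip P (\<lambda>p. cnj (f p)) (\<lambda>p. cnj (g p)) = cnj (ip P f g)"
  unfolding ip_def by simp

lemma span_from_herm:
  fixes W Z :: "nat \<Rightarrow> 'p \<Rightarrow> complex"
  assumes finP: "finite P" and indW: "indep P W {..<r}" and lnz: "\<forall>a<r. lam a \<noteq> 0"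
    and eqH: "\<forall>ii\<in>P. \<forall>jj\<in>P. (\<Sum>a<r. complex_of_real (lam a) * (W a ii * cnj (W a jj)))
                 = (\<Sum>b<r'. complex_of_real (mu b) * (Z b ii * cnj (Z b jj)))"
  shows "\<exists>s. \<forall>a<r. \<forall>ii\<in>P. W a ii = (\<Sum>b\<in>{b. b < r' \<and> mu b \<noteq> 0}. s a b * Z b ii)"
proof -
  obtain h where h: "\<forall>a\<in>{..<r}. \<forall>b\<in>{..<r}. ip P (W b) (h a) = (if a = b then 1 else 0)"
    using dual_exists[OF finP _ indW] by blast
  define t where "t = (\<lambda>a b. ip P (\<lambda>jj. cnj (Z b jj)) (\<lambda>jj. cnj (h a jj)))"
  define s where "s = (\<lambda>a b. complex_of_real (mu b) * t a b / complex_of_real (lam a))"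
  have "\<forall>a<r. \<forall>ii\<in>P. W a ii = (\<Sum>b\<in>{b. b < r' \<and> mu b \<noteq> 0}. s a b * Z b ii)"
  proof (intro allI impI ballI)
    fix a ii assume a: "a < r" and ii: "ii \<in> P"
    have L: "ip P (\<lambda>jj. \<Sum>a'<r. (complex_of_real (lam a') * W a' ii) * cnj (W a' jj)) (\<lambda>jj. cnj (h a jj))
        = complex_of_real (lam a) * W a ii"
    proof -
      have "ip P (\<lambda>jj. \<Sum>a'<r. (complex_of_real (lam a') * W a' ii) * cnj (W a' jj)) (\<lambda>jj. cnj (h a jj))
          = (\<Sum>a'<r. (complex_of_real (lam a') * W a' ii) * cnj (ip P (W a') (h a)))"
        by (simp add: ip_sum_left ip_cnj)
      also have "\<dots> = (\<Sum>a'<r. if a' = a then complex_of_real (lam a') * W a' ii else 0)"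
        by (rule sum.cong) (use h a in auto)
      also have "\<dots> = complex_of_real (lam a) * W a ii" using a by (simp add: sum.delta')
      finally show ?thesis .
    qed
    have R: "ip P (\<lambda>jj. \<Sum>b<r'. (complex_of_real (mu b) * Z b ii) * cnj (Z b jj)) (\<lambda>jj. cnj (h a jj))
        = (\<Sum>b<r'. (complex_of_real (mu b) * Z b ii) * t a b)"
      unfolding t_def by (simp add: ip_sum_left)
    have E: "ip P (\<lambda>jj. \<Sum>a'<r. (complex_of_real (lam a') * W a' ii) * cnj (W a' jj)) (\<lambda>jj. cnj (h a jj))
        = ip P (\<lambda>jj. \<Sum>b<r'. (complex_of_real (mu b) * Z b ii) * cnj (Z b jj)) (\<lambda>jj. cnj (h a jj))"
      unfolding ip_def
    proof (rule sum.cong[OF refl])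
      fix p assume p: "p \<in> P"
      have "(\<Sum>a'<r. (complex_of_real (lam a') * W a' ii) * cnj (W a' p))
          = (\<Sum>b<r'. (complex_of_real (mu b) * Z b ii) * cnj (Z b p))"
        using eqH ii p by (simp add: mult.assoc)
      then show "(\<Sum>a'<r. (complex_of_real (lam a') * W a' ii) * cnj (W a' p)) * cnj (h a p)
          = (\<Sum>b<r'. (complex_of_real (mu b) * Z b ii) * cnj (Z b p)) * cnj (h a p)" by simp
    qed
    then have "complex_of_real (lam a) * W a ii = (\<Sum>b<r'. (complex_of_real (mu b) * Z b ii) * t a b)"
      using L R by simp
    then have "W a ii = (\<Sum>b<r'. s a b * Z b ii)"
      using lnz a unfolding s_def by (simp add: sum_divide_distrib[symmetric] field_simps)
    also have "\<dots> = (\<Sum>b\<in>{b. b < r' \<and> mu b \<noteq> 0}. s a b * Z b ii)"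
      by (rule sum.mono_neutral_right) (auto simp: s_def)
    finally show "W a ii = (\<Sum>b\<in>{b. b < r' \<and> mu b \<noteq> 0}. s a b * Z b ii)" .
  qed
  then show ?thesis by blast
qed



lemma kr_le: "kruskal_rank d r S \<le> r"
proof -
  define P where "P = (\<lambda>k. k \<le> r \<and> (\<forall>J. J \<subseteq> {..<r} \<and> card J = k \<longrightarrow> lin_indep_on d S J))"
  have kdef: "kruskal_rank d r S = Greatest P" unfolding kruskal_rank_def P_def by simp
  have P0: "P 0" unfolding P_def
  proof (intro conjI allI impI)
    show "0 \<le> r" by simp
    fix J assume "J \<subseteq> {..<r} \<and> card J = 0"
    then have "J = {}" using finite_subset[of J "{..<r}"] by auto
    then show "lin_indep_on d S J" unfolding lin_indep_on_def by simp
  qed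
  have bnd: "\<And>y. P y \<Longrightarrow> y \<le> r" unfolding P_def by simp
  have "P (Greatest P)" by (rule GreatestI_nat[of P 0 r, OF P0 bnd])
  then show ?thesis using kdef bnd by simp
qed

theorem proposition2p5:
  fixes n :: "nat \<Rightarrow> nat" and m r :: nat and \<sigma> :: "nat \<Rightarrow> nat"
    and lam :: "nat \<Rightarrow> real" and u :: "nat \<Rightarrow> nat \<Rightarrow> nat \<Rightarrow> complex"
    and H :: "nat list \<Rightarrow> nat list \<Rightarrow> complex"
  assumes "m > 1"
    and "H = herm_sum m r lam u"
    and "\<forall>j<r. lam j \<noteq> 0"
    and "\<forall>j<r. \<forall>i<m. \<exists>x<n i. u j i x \<noteq> 0"
    and "(\<Sum>i<m. kruskal_rank (n i) r (\<lambda>j. u j i)) \<ge> r + m"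
  shows "hrank n m H = r \<and>
    (\<forall>mu v. tensor_eq n m H (herm_sum m r mu v) \<longrightarrow>
       (\<exists>\<sigma>. \<sigma> permutes {..<r} \<and>
          (\<forall>j<r. \<exists>c :: nat \<Rightarrow> complex.
              (\<forall>i<m. \<forall>x<n i. v (\<sigma> j) i x = c i * u j i x) \<and>
              mu (\<sigma> j) * (\<Prod>i<m. (cmod (c i))\<^sup>2) = lam j)))"
proof -
  define k where "k = (\<lambda>i. kruskal_rank (n i) r (\<lambda>j. u j i))"
  have kle: "\<forall>i<m. k i \<le> r" unfolding k_def using kr_le by blast
  have ksum: "r + m \<le> (\<Sum>i<m. k i)" using assms(5) unfolding k_def by simp
  have r1: "r \<ge> 1"
  proof (rule ccontr)
    assume "\<not> r \<ge> 1"
    then have "r = 0" by simp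
    then have "(\<Sum>i<m. k i) \<le> (\<Sum>i<m. 0)" using kle by (intro sum_mono) auto
    then show False using ksum assms(1) by simp
  qed
  have npos: "\<forall>i<m. n i > 0" using assms(4) r1 by (metis gr_zeroI less_nat_zero_code less_one linorder_not_le)
  have kr: "\<forall>i<m. \<forall>J. J \<subseteq> {..<r} \<and> card J \<le> k i \<longrightarrow> indep {..<n i} (\<lambda>j. u j i) J"
    and k1: "\<forall>i<m. k i \<ge> 1"
  proof -
    have nz: "\<And>i. i < m \<Longrightarrow> \<forall>j<r. \<exists>x<n i. u j i x \<noteq> 0" using assms(4) by blast
    show "\<forall>i<m. \<forall>J. J \<subseteq> {..<r} \<and> card J \<le> k i \<longrightarrow> indep {..<n i} (\<lambda>j. u j i) J"
      unfolding k_def using kr_props(3)[OF nz r1] by blast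
    show "\<forall>i<m. k i \<ge> 1" unfolding k_def using kr_props(2)[OF nz r1] by blast
  qed
  define W where "W = WI u {..<m}"
  have Windep: "indep (VP n m) W {..<r}"
    unfolding W_def by (rule K_lemma[OF kr k1 npos]) (use ksum assms(1) in auto)
  have Hform: "H x y = (\<Sum>j<r. complex_of_real (lam j) * (W j x * cnj (W j y)))" for x y
    unfolding assms(2) W_def by (rule herm_sum_eq)
  have eqH_of: "\<forall>x\<in>VP n m. \<forall>y\<in>VP n m. (\<Sum>a<r. complex_of_real (lam a) * (W a x * cnj (W a y)))
      = (\<Sum>b<r'. complex_of_real (mu b) * (WI v {..<m} b x * cnj (WI v {..<m} b y)))"
    if "tensor_eq n m H (herm_sum m r' mu v)" for r' mu v
    using that unfolding tensor_eq_def VP_def by (simp add: Hform herm_sum_eq)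
  have lower: "r \<le> r'" if te: "tensor_eq n m H (herm_sum m r' mu v)" for r' mu v
  proof -
    obtain s where s: "\<forall>a<r. \<forall>x\<in>VP n m. W a x = (\<Sum>b\<in>{b. b < r' \<and> mu b \<noteq> 0}. s a b * WI v {..<m} b x)"
      using span_from_herm[OF finite_VP Windep assms(3) eqH_of[OF te]] by blast
    have "card {..<r} \<le> card {b. b < r' \<and> mu b \<noteq> 0}"
      by (rule span_card_le[OF _ _ Windep]) (use s in auto)
    also have "\<dots> \<le> card {..<r'}" by (rule card_mono) auto
    finally show ?thesis by simp
  qed
  have hr: "hrank n m H = r" unfolding hrank_def
  proof (rule Least_equality)
    show "\<exists>lam' u'. tensor_eq n m H (herm_sum m r lam' u')" using assms(2) unfolding tensor_eq_def by blast
  next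
    fix r' assume "\<exists>lam' u'. tensor_eq n m H (herm_sum m r' lam' u')"
    then show "r \<le> r'" using lower by blast
  qed
  have uniq: "\<exists>\<sigma>. \<sigma> permutes {..<r} \<and>
          (\<forall>j<r. \<exists>c :: nat \<Rightarrow> complex.
              (\<forall>i<m. \<forall>x<n i. v (\<sigma> j) i x = c i * u j i x) \<and>
              mu (\<sigma> j) * (\<Prod>i<m. (cmod (c i))\<^sup>2) = lam j)"
    if te: "tensor_eq n m H (herm_sum m r mu v)" for mu v
  proof -
    define Z where "Z = WI v {..<m}"
    have eqH: "\<forall>x\<in>VP n m. \<forall>y\<in>VP n m. (\<Sum>a<r. complex_of_real (lam a) * (W a x * cnj (W a y)))
      = (\<Sum>b<r. complex_of_real (mu b) * (Z b x * cnj (Z b y)))"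
      using eqH_of[OF te] unfolding Z_def .
    obtain s where s: "\<forall>a<r. \<forall>x\<in>VP n m. W a x = (\<Sum>b\<in>{b. b < r \<and> mu b \<noteq> 0}. s a b * Z b x)"
      using span_from_herm[OF finite_VP Windep assms(3) eqH] by blast
    have "card {..<r} \<le> card {b. b < r \<and> mu b \<noteq> 0}"
      by (rule span_card_le[OF _ _ Windep]) (use s in auto)
    moreover have "card {b. b < r \<and> mu b \<noteq> 0} \<le> card {..<r}" by (rule card_mono) auto
    ultimately have Beq: "{b. b < r \<and> mu b \<noteq> 0} = {..<r}"
      by (intro card_subset_eq) auto
    then have munz: "\<forall>b<r. mu b \<noteq> 0" by auto
    have s': "\<forall>a<r. \<forall>x\<in>VP n m. W a x = (\<Sum>b<r. s a b * Z b x)" using s Beq by simp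
    have Zindep: "indep (VP n m) Z {..<r}"
      unfolding indep_def
    proof (intro allI impI)
      fix \<beta> assume h\<beta>: "\<forall>p\<in>VP n m. (\<Sum>b\<in>{..<r}. \<beta> b * Z b p) = 0"
      show "\<forall>b\<in>{..<r}. \<beta> b = 0"
      proof (rule ccontr)
        assume "\<not> (\<forall>b\<in>{..<r}. \<beta> b = 0)"
        then obtain b0 where b0: "b0 < r" "\<beta> b0 \<noteq> 0" by auto
        define B0 where "B0 = {..<r} - {b0}"
        have rem: "(\<Sum>b<r. g b) = g b0 + (\<Sum>b\<in>B0. g b)" for g :: "nat \<Rightarrow> complex"
          unfolding B0_def using b0 by (simp add: sum.remove)
        have "\<forall>a\<in>{..<r}. \<forall>p\<in>VP n m. W a p = (\<Sum>b\<in>B0. (s a b - s a b0 * \<beta> b / \<beta> b0) * Z b p)"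
        proof (intro ballI)
          fix a p assume a: "a \<in> {..<r}" and p: "p \<in> VP n m"
          have e1: "\<beta> b0 * Z b0 p + (\<Sum>b\<in>B0. \<beta> b * Z b p) = 0" using h\<beta> p rem by simp
          have e2: "W a p = s a b0 * Z b0 p + (\<Sum>b\<in>B0. s a b * Z b p)" using s' a p rem by simp
          have e3: "(\<Sum>b\<in>B0. (s a b - s a b0 * \<beta> b / \<beta> b0) * Z b p)
              = (\<Sum>b\<in>B0. s a b * Z b p) - (s a b0 / \<beta> b0) * (\<Sum>b\<in>B0. \<beta> b * Z b p)"
            by (simp add: sum_subtractf sum_distrib_left algebra_simps)
          have e4: "(\<Sum>b\<in>B0. \<beta> b * Z b p) = - (\<beta> b0 * Z b0 p)" using e1 by (simp add: eq_neg_iff_add_eq_0 add.commute)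
          show "W a p = (\<Sum>b\<in>B0. (s a b - s a b0 * \<beta> b / \<beta> b0) * Z b p)"
            unfolding e3 e4 e2 using b0(2) by simp
        qed
        then have "card {..<r} \<le> card B0"
          by (intro span_card_le[OF _ _ Windep]) (auto simp: B0_def)
        then show False using b0 r1 unfolding B0_def by simp
      qed
    qed
    have eqH': "\<forall>x\<in>VP n m. \<forall>y\<in>VP n m. (\<Sum>b<r. complex_of_real (mu b) * (Z b x * cnj (Z b y)))
      = (\<Sum>a<r. complex_of_real (lam a) * (W a x * cnj (W a y)))"
      using eqH by simp
    obtain s2 where s2: "\<forall>b<r. \<forall>x\<in>VP n m. Z b x = (\<Sum>a\<in>{a. a < r \<and> lam a \<noteq> 0}. s2 b a * W a x)"
      using span_from_herm[OF finite_VP Zindep munz eqH'] by blast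
    have Aeq: "{a. a < r \<and> lam a \<noteq> 0} = {..<r}" using assms(3) by auto
    have ex: "\<forall>b\<in>{..<r}. \<exists>ad. fst ad < r \<and> snd ad \<noteq> 0 \<and> (\<forall>x\<in>VP n m. Z b x = snd ad * W (fst ad) x)"
    proof
      fix b assume b: "b \<in> {..<r}"
      have zd: "\<forall>x\<in>VP n m. (\<Prod>i<m. v b i (x ! i)) = (\<Sum>a<r. s2 b a * WI u {..<m} a x)"
        using s2 b Aeq unfolding Z_def W_def WI_def by simp
      obtain x0 where x0: "x0 \<in> VP n m" "Z b x0 \<noteq> 0" using indep_nonzero[OF Zindep b] by auto
      have nz: "\<exists>x\<in>VP n m. (\<Prod>i<m. v b i (x ! i)) \<noteq> 0" using x0 unfolding Z_def WI_def by blast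
      obtain a0 where a0: "a0 < r" "\<forall>a<r. a \<noteq> a0 \<longrightarrow> s2 b a = 0"
        using L2[OF kr k1 npos kle assms(1) ksum zd nz] by blast
      have Zb: "\<forall>x\<in>VP n m. Z b x = s2 b a0 * W a0 x"
      proof
        fix x assume x: "x \<in> VP n m"
        have "Z b x = (\<Sum>a<r. s2 b a * W a x)" using s2 b Aeq x by simp
        also have "\<dots> = (\<Sum>a<r. if a = a0 then s2 b a * W a x else 0)"
          by (rule sum.cong) (use a0 in auto)
        also have "\<dots> = s2 b a0 * W a0 x" using a0 by (simp add: sum.delta')
        finally show "Z b x = s2 b a0 * W a0 x" .
      qed
      have "s2 b a0 \<noteq> 0" using Zb x0 by auto
      then show "\<exists>ad. fst ad < r \<and> snd ad \<noteq> 0 \<and> (\<forall>x\<in>VP n m. Z b x = snd ad * W (fst ad) x)"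
        using a0 Zb by (intro exI[of _ "(a0, s2 b a0)"]) simp
    qed
    obtain f where f: "\<forall>b\<in>{..<r}. fst (f b) < r \<and> snd (f b) \<noteq> 0 \<and> (\<forall>x\<in>VP n m. Z b x = snd (f b) * W (fst (f b)) x)"
      using bchoice[OF ex] by blast
    define \<pi> where "\<pi> = (\<lambda>b. fst (f b))"
    define d where "d = (\<lambda>b. snd (f b))"
    have \<pi>r: "\<And>b. b < r \<Longrightarrow> \<pi> b < r" and dnz: "\<And>b. b < r \<Longrightarrow> d b \<noteq> 0"
      and Zd: "\<And>b x. b < r \<Longrightarrow> x \<in> VP n m \<Longrightarrow> Z b x = d b * W (\<pi> b) x"
      using f unfolding \<pi>_def d_def by auto
    have inj: "inj_on \<pi> {..<r}"
    proof (rule inj_onI)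
      fix b1 b2 assume b1: "b1 \<in> {..<r}" and b2: "b2 \<in> {..<r}" and eq: "\<pi> b1 = \<pi> b2"
      show "b1 = b2"
      proof (rule ccontr)
        assume ne: "b1 \<noteq> b2"
        define c where "c = (\<lambda>b. if b = b1 then d b2 else if b = b2 then - d b1 else 0)"
        have "\<forall>p\<in>VP n m. (\<Sum>b\<in>{..<r}. c b * Z b p) = 0"
        proof
          fix p assume p: "p \<in> VP n m"
          have "(\<Sum>b\<in>{..<r}. c b * Z b p) = (\<Sum>b\<in>{b1, b2}. c b * Z b p)"
            using b1 b2 by (intro sum.mono_neutral_right) (auto simp: c_def)
          also have "\<dots> = d b2 * Z b1 p - d b1 * Z b2 p" using ne by (simp add: c_def)
          also have "\<dots> = 0" using Zd[OF _ p] b1 b2 eq by simp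
          finally show "(\<Sum>b\<in>{..<r}. c b * Z b p) = 0" .
        qed
        then have "c b1 = 0" using Zindep b1 unfolding indep_def by blast
        then show False using dnz b2 by (simp add: c_def)
      qed
    qed
    have img: "\<pi> ` {..<r} = {..<r}" by (rule endo_inj_surj) (use \<pi>r inj in auto)
    have bij: "bij_betw \<pi> {..<r} {..<r}" using inj img by (simp add: bij_betw_def)
    define \<tau> where "\<tau> = (\<lambda>a. if a < r then inv_into {..<r} \<pi> a else a)"
    have bij\<tau>: "bij_betw \<tau> {..<r} {..<r}"
    proof -
      have "bij_betw (inv_into {..<r} \<pi>) {..<r} {..<r}" by (rule bij_betw_inv_into[OF bij])
      moreover have "bij_betw \<tau> {..<r} {..<r} = bij_betw (inv_into {..<r} \<pi>) {..<r} {..<r}"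
        by (rule bij_betw_cong) (simp add: \<tau>_def)
      ultimately show ?thesis by simp
    qed
    have perm: "\<tau> permutes {..<r}" by (rule bij_imp_permutes[OF bij\<tau>]) (simp add: \<tau>_def)
    have \<tau>r: "\<And>a. a < r \<Longrightarrow> \<tau> a < r" using bij\<tau> by (auto simp: bij_betw_def)
    have \<pi>\<tau>: "\<And>a. a < r \<Longrightarrow> \<pi> (\<tau> a) = a"
      unfolding \<tau>_def using img by (simp add: f_inv_into_f)
    have coef: "lam a = mu (\<tau> a) * (cmod (d (\<tau> a)))\<^sup>2" if a: "a < r" for a
    proof -
      define \<kappa> where "\<kappa> = (\<lambda>a. complex_of_real (lam a) - complex_of_real (mu (\<tau> a) * (cmod (d (\<tau> a)))\<^sup>2))"
      have zero: "(\<Sum>a<r. \<kappa> a * (W a x * cnj (W a y))) = 0" if x: "x \<in> VP n m" and y: "y \<in> VP n m" for x y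
      proof -
        define G where "G = (\<lambda>b. complex_of_real (mu b * (cmod (d b))\<^sup>2) * (W (\<pi> b) x * cnj (W (\<pi> b) y)))"
        have "(\<Sum>b<r. complex_of_real (mu b) * (Z b x * cnj (Z b y))) = (\<Sum>b<r. G b)"
        proof (rule sum.cong[OF refl])
          fix b assume "b \<in> {..<r}"
          then have b: "b < r" by simp
          have "Z b x * cnj (Z b y) = (d b * cnj (d b)) * (W (\<pi> b) x * cnj (W (\<pi> b) y))"
            using Zd[OF b x] Zd[OF b y] by simp
          also have "d b * cnj (d b) = complex_of_real ((cmod (d b))\<^sup>2)"
            by (rule complex_norm_square[symmetric])
          finally show "complex_of_real (mu b) * (Z b x * cnj (Z b y)) = G b"
            unfolding G_def by simp
        qed
        also have "\<dots> = (\<Sum>a<r. G (\<tau> a))" by (rule sum.reindex_bij_betw[OF bij\<tau>, symmetric])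
        also have "\<dots> = (\<Sum>a<r. complex_of_real (mu (\<tau> a) * (cmod (d (\<tau> a)))\<^sup>2) * (W a x * cnj (W a y)))"
          by (rule sum.cong) (auto simp: G_def \<pi>\<tau>)
        finally have "(\<Sum>a<r. complex_of_real (lam a) * (W a x * cnj (W a y)))
            = (\<Sum>a<r. complex_of_real (mu (\<tau> a) * (cmod (d (\<tau> a)))\<^sup>2) * (W a x * cnj (W a y)))"
          using eqH x y by simp
        then show ?thesis unfolding \<kappa>_def by (simp add: algebra_simps sum_subtractf)
      qed
      obtain y0 where y0: "y0 \<in> VP n m" "W a y0 \<noteq> 0" using indep_nonzero[OF Windep] a by blast
      have "\<forall>x\<in>VP n m. (\<Sum>a'\<in>{..<r}. (\<kappa> a' * cnj (W a' y0)) * W a' x) = 0"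
        using zero y0 by (simp add: algebra_simps)
      moreover have "(\<forall>p\<in>VP n m. (\<Sum>j<r. (\<lambda>a'. \<kappa> a' * cnj (W a' y0)) j * W j p) = 0)
          \<longrightarrow> (\<forall>j\<in>{..<r}. (\<lambda>a'. \<kappa> a' * cnj (W a' y0)) j = 0)"
        using Windep unfolding indep_def by (rule spec)
      ultimately have "\<kappa> a * cnj (W a y0) = 0" using a by simp
      then have "\<kappa> a = 0" using y0 by simp
      then show ?thesis unfolding \<kappa>_def by (metis eq_iff_diff_eq_0 of_real_eq_iff)
    qed
    have "\<forall>j<r. \<exists>c :: nat \<Rightarrow> complex.
              (\<forall>i<m. \<forall>x<n i. v (\<tau> j) i x = c i * u j i x) \<and>
              mu (\<tau> j) * (\<Prod>i<m. (cmod (c i))\<^sup>2) = lam j"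
    proof (intro allI impI)
      fix j assume j: "j < r"
      have b: "\<tau> j < r" using \<tau>r[OF j] .
      have eqp: "\<forall>x\<in>VP n m. (\<Prod>i<m. v (\<tau> j) i (x ! i)) = d (\<tau> j) * (\<Prod>i<m. u j i (x ! i))"
        using Zd[OF b] \<pi>\<tau>[OF j] unfolding Z_def W_def WI_def by simp
      have wnz: "\<forall>i<m. \<exists>x<n i. u j i x \<noteq> 0" using assms(4) j by blast
      obtain c where c: "\<forall>i<m. \<forall>x<n i. v (\<tau> j) i x = c i * u j i x" "(\<Prod>i<m. c i) = d (\<tau> j)"
        using PF[OF wnz dnz[OF b] eqp] by blast
      have "(\<Prod>i<m. (cmod (c i))\<^sup>2) = (cmod (d (\<tau> j)))\<^sup>2"
        using c(2) by (simp add: prod_power_distrib[symmetric] prod_norm)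
      then have "mu (\<tau> j) * (\<Prod>i<m. (cmod (c i))\<^sup>2) = lam j" using coef[OF j] by simp
      then show "\<exists>c :: nat \<Rightarrow> complex. (\<forall>i<m. \<forall>x<n i. v (\<tau> j) i x = c i * u j i x) \<and>
              mu (\<tau> j) * (\<Prod>i<m. (cmod (c i))\<^sup>2) = lam j" using c(1) by blast
    qed
    then show ?thesis using perm by blast
  qed
  show ?thesis using hr uniq by blast
qed

end
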